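(* Let $r_1,r_2,r_3,L>0$ with $r_2>\max(r_1,r_3)$. For positive $a,b$ with $r_2>\max(a,b)$ let $m_{a,b}(y)=a\mathbf 1_{y<0}+r_2\mathbf 1_{0\le y<1}+b\mathbf 1_{y\ge1}$ and $\lambda_1(a,b)=\sup\{\lambda : \exists\,\varphi\in W^{2,1}_{\mathrm{loc}}(\mathbb{R}),\ \varphi>0,\ L^{-2}\varphi''+(m_{a,b}+\lambda)\varphi\le0\}$. Then $\lambda_1(r_1,r_3)=\lambda_1(r_3,r_1)$. *)

theory Defs
  imports "HOL-Analysis.Analysis"
begin

definition mcoef :: "real \<Rightarrow> real \<Rightarrow> real \<Rightarrow> real \<Rightarrow> real" where
  "mcoef r2 a b y = (if y < 0 then a else if y < 1 then r2 else b)"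

text \<open>phi belongs to W^{2,1}_loc(R) with (a.e.) second derivative phi2, described through
  its absolutely continuous representative: phi is differentiable everywhere with
  derivative phi1, phi2 is Lebesgue integrable on every compact interval, and phi1 is
  the indefinite integral of phi2 (so phi1 is locally absolutely continuous).\<close>
definition W21loc :: "(real \<Rightarrow> real) \<Rightarrow> (real \<Rightarrow> real) \<Rightarrow> bool" where
  "W21loc phi phi2 \<longleftrightarrow>
     (\<exists>phi1. (\<forall>x. (phi has_real_derivative phi1 x) (at x)) \<and>
        (\<forall>a b. a \<le> b \<longrightarrow> phi2 absolutely_integrable_on {a..b} \<and>
                 phi1 b - phi1 a = integral {a..b} phi2))"

definition lambda1 :: "real \<Rightarrow> real \<Rightarrow> real \<Rightarrow> real \<Rightarrow> ereal" where
  "lambda1 r2 L a b = Sup {ereal lam | lam. \<exists>phi phi2. W21loc phi phi2 \<and> (\<forall>y. phi y > 0) \<and>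
      (AE y in lborel. phi2 y / L^2 + (mcoef r2 a b y + lam) * phi y \<le> 0)}"

end

theory Submission
  imports Defs
begin
lemma negligible_reflect:
  assumes "negligible (S::real set)" shows "negligible (uminus ` S)"
  unfolding negligible_def
proof (intro allI)
  fix a b :: real
  have "(indicator S has_integral (0::real)) (cbox (-b) (-a))" using assms unfolding negligible_def by blast
  then have *: "(indicator S has_integral (0::real)) {-b..-a}" by simp
  have eq: "indicator (uminus ` S) = (\<lambda>x::real. indicator S (-x) :: real)"
    by (force simp: indicator_def)
  show "(indicator (uminus ` S) has_integral (0::real)) (cbox a b)"
    using * has_integral_reflect_real[of "indicator S :: real \<Rightarrow> real" 0 "-a" "-b"] by (simp add: eq)
qed

lemma AE_refl:
  assumes "AE y in lborel. P y" shows "AE y in lborel. P (1 - y::real)"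
proof -
  have "AE y in lebesgue. P y" using assms by (simp add: AE_completion_iff)
  then obtain N where N: "negligible N" "{x. \<not> P x} \<subseteq> N"
    using eventually_ae_filter_negligible by blast
  have "negligible ((+) 1 ` (uminus ` N))" using N(1) negligible_reflect negligible_translation by blast
  moreover have "{x. \<not> P (1 - x)} \<subseteq> (+) 1 ` (uminus ` N)"
  proof
    fix x assume "x \<in> {x. \<not> P (1 - x)}"
    then have "1 - x \<in> N" using N(2) by auto
    then have "-(1-x) \<in> uminus ` N" by blast
    moreover have "x = 1 + (-(1-x))" by simp
    ultimately show "x \<in> (+) 1 ` (uminus ` N)" by (metis image_eqI)
  qed
  ultimately have "AE y in lebesgue. P (1 - y)"
    using eventually_ae_filter_negligible by blast
  then show ?thesis by (simp add: AE_completion_iff)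
qed

lemma refl_has_integral:
  fixes f :: "real \<Rightarrow> real"
  assumes "(f has_integral I) {1-b..1-a}"
  shows "((\<lambda>y. f (1 - y)) has_integral I) {a..b}"
proof -
  have g: "((\<lambda>x. f (x + 1)) has_integral I) {-b..-a}"
    using has_integral_shift_real_ivl[of f I "1-b" "1-a" 1] assms by simp
  have "((\<lambda>x. (\<lambda>x. f (x + 1)) (-x)) has_integral I) {a..b}"
    using has_integral_reflect_real[of "\<lambda>x. f (x + 1)" I "-a" "-b"] g by simp
  moreover have "(\<lambda>x. (\<lambda>x. f (x + 1)) (-x)) = (\<lambda>y. f (1 - y))" by (simp add: add.commute)
  ultimately show ?thesis by simp
qed

lemma refl_integrable:
  fixes f :: "real \<Rightarrow> real"
  assumes "f integrable_on {1-b..1-a}"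
  shows "(\<lambda>y. f (1 - y)) integrable_on {a..b}" "integral {a..b} (\<lambda>y. f (1 - y)) = integral {1-b..1-a} f"
  using refl_has_integral[OF integrable_integral[OF assms]] by (auto simp: integral_unique integrable_on_def)

lemma refl_abs_integrable:
  fixes f :: "real \<Rightarrow> real"
  assumes "f absolutely_integrable_on {1-b..1-a}"
  shows "(\<lambda>y. f (1 - y)) absolutely_integrable_on {a..b}"
  using assms refl_integrable(1)[of f b a] refl_integrable(1)[of "\<lambda>x. norm (f x)" b a]
  unfolding absolutely_integrable_on_def by auto

lemma W21loc_refl:
  assumes "W21loc phi phi2" shows "W21loc (\<lambda>y. phi (1 - y)) (\<lambda>y. phi2 (1 - y))"
proof -
  obtain phi1 where d: "\<And>x. (phi has_real_derivative phi1 x) (at x)"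
    and i: "\<And>a b. a \<le> b \<Longrightarrow> phi2 absolutely_integrable_on {a..b} \<and> phi1 b - phi1 a = integral {a..b} phi2"
    using assms unfolding W21loc_def by blast
  show ?thesis unfolding W21loc_def
  proof (intro exI[of _ "\<lambda>x. - phi1 (1 - x)"] conjI allI impI)
    fix x
    have "((\<lambda>y. 1 - y) has_real_derivative -1) (at x)"
      by (auto intro!: derivative_eq_intros)
    from DERIV_chain2[OF d this] show "((\<lambda>y. phi (1 - y)) has_real_derivative - phi1 (1 - x)) (at x)"
      by simp
  next
    fix a b :: real assume ab: "a \<le> b"
    then have "1 - b \<le> 1 - a" by simp
    note ii = i[OF this]
    show "(\<lambda>y. phi2 (1 - y)) absolutely_integrable_on {a..b}"
      using refl_abs_integrable ii by blast
    have "integral {a..b} (\<lambda>y. phi2 (1 - y)) = integral {1-b..1-a} phi2"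
      using refl_integrable(2) ii set_lebesgue_integral_eq_integral(1) by blast
    then show "- phi1 (1 - b) - - phi1 (1 - a) = integral {a..b} (\<lambda>y. phi2 (1 - y))"
      using ii by simp
  qed
qed

lemma set_sub:
  assumes "x \<in> {ereal lam | lam. \<exists>phi phi2. W21loc phi phi2 \<and> (\<forall>y. phi y > 0) \<and>
      (AE y in lborel. phi2 y / L^2 + (mcoef r2 a b y + lam) * phi y \<le> 0)}"
  shows "x \<in> {ereal lam | lam. \<exists>phi phi2. W21loc phi phi2 \<and> (\<forall>y. phi y > 0) \<and>
      (AE y in lborel. phi2 y / L^2 + (mcoef r2 b a y + lam) * phi y \<le> 0)}"
proof -
  obtain lam phi phi2 where x: "x = ereal lam" and w: "W21loc phi phi2" and p: "\<forall>y. phi y > 0"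
    and ae: "AE y in lborel. phi2 y / L^2 + (mcoef r2 a b y + lam) * phi y \<le> 0"
    using assms by blast
  have ae2: "AE y in lborel. phi2 (1 - y) / L^2 + (mcoef r2 a b (1 - y) + lam) * phi (1 - y) \<le> 0"
    using AE_refl[OF ae] .
  have "AE y in lborel. y \<noteq> 0" "AE y in lborel. y \<noteq> 1" by (rule AE_lborel_singleton)+
  with ae2 have "AE y in lborel. phi2 (1 - y) / L^2 + (mcoef r2 b a y + lam) * phi (1 - y) \<le> 0"
  proof eventually_elim
    case (elim y)
    then have "mcoef r2 a b (1 - y) = mcoef r2 b a y" by (auto simp: mcoef_def)
    with elim show ?case by simp
  qed
  then show ?thesis using x W21loc_refl[OF w] p by blast
qed

theorem proposition4p3:
  fixes r1 r2 r3 L :: real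
  assumes "r1 > 0" "r2 > 0" "r3 > 0" "L > 0" "r2 > max r1 r3"
  shows "lambda1 r2 L r1 r3 = lambda1 r2 L r3 r1"
proof -
  have "{ereal lam | lam. \<exists>phi phi2. W21loc phi phi2 \<and> (\<forall>y. phi y > 0) \<and>
      (AE y in lborel. phi2 y / L^2 + (mcoef r2 r1 r3 y + lam) * phi y \<le> 0)}
    = {ereal lam | lam. \<exists>phi phi2. W21loc phi phi2 \<and> (\<forall>y. phi y > 0) \<and>
      (AE y in lborel. phi2 y / L^2 + (mcoef r2 r3 r1 y + lam) * phi y \<le> 0)}"
    using set_sub[of _ L r2 r1 r3] set_sub[of _ L r2 r3 r1] by blast
  then show ?thesis unfolding lambda1_def by simp
qed

end
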